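(* Let $n\ge 1$, let $\gamma_1,\dots,\gamma_{n+1}\in\mathbb{C}$, and let $s_1,\dots,s_{n+1}$ be sufficiently differentiable functions of $z$. Then $$W^{\gamma_n,\gamma_{n+1}}_2\Big(W^{\gamma_1,\dots,\gamma_n}_n(s_1,\dots,s_n),\ W^{\gamma_1,\dots,\gamma_{n-1},\gamma_{n+1}}_n(s_1,\dots,s_{n-1},s_{n+1})\Big)=W^{\gamma_1,\dots,\gamma_{n-1}}_{n-1}(s_1,\dots,s_{n-1})\;W^{\gamma_1,\dots,\gamma_{n+1}}_{n+1}(s_1,\dots,s_{n+1}).$$
   Context: For constants $\gamma_i$ put $\nabla_i=\partial_z+\gamma_i$. For $k\ge1$ the twisted Wronskian of functions $f_1,\dots,f_k$ with twists $\gamma_{i_1},\dots,\gamma_{i_k}$ is the determinant $$W^{\gamma_{i_1},\dots,\gamma_{i_k}}_k(f_1,\dots,f_k)=\det_{1\le a,b\le k}\big[(\partial_z+\gamma_{i_a})^{b-1}f_a\big];$$ in particular $W^{\alpha,\beta}_2(f,g)=f\,(g'+\beta g)-g\,(f'+\alpha f)$. By convention the Wronskian of the empty family ($k=0$) equals $1$. *)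

theory Defs
  imports "HOL-Analysis.Analysis" "Jordan_Normal_Form.Determinant"
begin

definition twop :: "complex \<Rightarrow> (complex \<Rightarrow> complex) \<Rightarrow> complex \<Rightarrow> complex" where
  "twop \<gamma> f = (\<lambda>z. deriv f z + \<gamma> * f z)"

text \<open>For k = 0 this is the determinant of the empty matrix, i.e. 1.\<close>
definition twronskian :: "nat \<Rightarrow> (nat \<Rightarrow> complex) \<Rightarrow> (nat \<Rightarrow> complex \<Rightarrow> complex) \<Rightarrow> complex \<Rightarrow> complex" where
  "twronskian k g f = (\<lambda>z. Determinant.det (mat k k (\<lambda>(a, b). ((twop (g a)) ^^ b) (f a) z)))"

end

theory Submission imports Defs "Jordan_Normal_Form.Char_Poly" "HOL-Complex_Analysis.Cauchy_Integral_Formula" begin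

lemma det_2x2:
  assumes "A \<in> carrier_mat 2 2"
  shows "det A = A $$ (0,0) * A $$ (1,1) - A $$ (0,1) * A $$ (1,0)"
proof -
  have "det A = (\<Sum>i<2. A $$ (i,0) * cofactor A i 0)"
    using laplace_expansion_column[OF assms, of 0] by simp
  also have "\<dots> = A $$ (0,0) * cofactor A 0 0 + A $$ (1,0) * cofactor A 1 0"
    by (simp add: numeral_2_eq_2)
  also have "cofactor A 0 0 = A $$ (1,1)"
    unfolding cofactor_def using assms
    by (subst det_single) (auto simp: mat_delete_def)
  also have "cofactor A 1 0 = - A $$ (0,1)"
    unfolding cofactor_def using assms
    by (subst det_single) (auto simp: mat_delete_def)
  finally show ?thesis by (simp add: algebra_simps)
qed

lemma dj_idom_aux:
  fixes M :: "'a::idom mat"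
  assumes M: "M \<in> carrier_mat (k+2) (k+2)"
  shows "det M * (det (mat_delete M (k+1) (k+1)) * det (mat_delete M k k)
          - det (mat_delete M (k+1) k) * det (mat_delete M k (k+1)))
        = det M * (det (mat k k (\<lambda>(i,j). M $$ (i,j))) * det M)"
proof -
  define adj where "adj = adj_mat M"
  define d where "d = det M"
  have adjc: "adj \<in> carrier_mat (k+2) (k+2)" using adj_mat[OF M] adj_def by simp
  have Madj: "M * adj = d \<cdot>\<^sub>m 1\<^sub>m (k+2)" using adj_mat[OF M] adj_def d_def by simp
  define X where "X = four_block_mat (1\<^sub>m k) (mat k 2 (\<lambda>(i,j). adj $$ (i,k+j)))
     (0\<^sub>m 2 k) (mat 2 2 (\<lambda>(i,j). adj $$ (k+i,k+j)))"
  define Y where "Y = four_block_mat (mat k k (\<lambda>(i,j). M $$ (i,j))) (0\<^sub>m k 2)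
     (mat 2 k (\<lambda>(i,j). M $$ (k+i,j))) (d \<cdot>\<^sub>m 1\<^sub>m 2)"
  have X: "X = mat (k+2) (k+2) (\<lambda>(i,j). if j < k then (if i = j then 1 else 0) else adj $$ (i,j))"
    unfolding X_def by (rule eq_matI) (auto simp: four_block_mat_def)
  have Y: "Y = mat (k+2) (k+2) (\<lambda>(i,j). if j < k then M $$ (i,j) else if i = j then d else 0)"
    unfolding Y_def by (rule eq_matI) (auto simp: four_block_mat_def)
  have Xc: "X \<in> carrier_mat (k+2) (k+2)" using X by simp
  have MXY: "M * X = Y"
  proof (rule eq_matI)
    fix i j assume ij: "i < dim_row Y" "j < dim_col Y"
    hence i: "i < k+2" and j: "j < k+2" using Y by auto
    show "(M * X) $$ (i,j) = Y $$ (i,j)"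
    proof (cases "j < k")
      case True
      have "(M * X) $$ (i,j) = (\<Sum>l<k+2. M $$ (i,l) * (if l = j then 1 else 0))"
        using M i j True unfolding X by (auto simp: scalar_prod_def atLeast0LessThan intro!: sum.cong)
      also have "\<dots> = M $$ (i,j)" using j by (simp add: if_distrib cong: if_cong)
      finally show ?thesis using True i j Y by simp
    next
      case False
      have "(M * X) $$ (i,j) = (M * adj) $$ (i,j)"
        using M i j False adjc unfolding X by (auto simp: scalar_prod_def intro!: sum.cong)
      also have "\<dots> = (if i = j then d else 0)" using Madj i j by simp
      finally show ?thesis using False i j Y by simp
    qed
  qed (use M X Y in auto)
  have h1: "det (M * X) = d * det X" using det_mult[OF M Xc] d_def by simp
  have h2: "det X = det (mat 2 2 (\<lambda>(i,j). adj $$ (k+i,k+j)))"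
    unfolding X_def by (subst det_four_block_mat_lower_left_zero) auto
  have h3: "det Y = det (mat k k (\<lambda>(i,j). M $$ (i,j))) * (d * d)"
    unfolding Y_def by (subst det_four_block_mat_upper_right_zero) (auto simp: power2_eq_square)
  have h4: "det (mat 2 2 (\<lambda>(i,j). adj $$ (k+i,k+j))) =
     det (mat_delete M (k+1) (k+1)) * det (mat_delete M k k)
          - det (mat_delete M (k+1) k) * det (mat_delete M k (k+1))"
  proof -
    have dims: "dim_row M = k+2" "dim_col M = k+2" using M by auto
    have e1: "(-1::'a)^(k+k) = 1" "(-1::'a)^(Suc k+Suc k) = 1"
      by (rule neg_one_even_power, simp)+
    have e2: "(-1::'a)^(k+Suc k) = -1" "(-1::'a)^(Suc k+k) = -1"
      by (rule neg_one_odd_power, simp)+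
    show ?thesis
      by (subst det_2x2) (auto simp: adj_def adj_mat_def cofactor_def dims e1 e2)
  qed
  have "d * (det (mat_delete M (k+1) (k+1)) * det (mat_delete M k k)
          - det (mat_delete M (k+1) k) * det (mat_delete M k (k+1))) = det (M * X)"
    using h1 h2 h4 by simp
  also have "\<dots> = d * (det (mat k k (\<lambda>(i,j). M $$ (i,j))) * d)"
    using MXY h3 by (simp add: ac_simps)
  finally show ?thesis unfolding d_def .
qed

lemma dj:
  fixes M :: "'a::idom mat"
  assumes M: "M \<in> carrier_mat (k+2) (k+2)"
  shows "det (mat_delete M (k+1) (k+1)) * det (mat_delete M k k)
          - det (mat_delete M (k+1) k) * det (mat_delete M k (k+1))
        = det (mat k k (\<lambda>(i,j). M $$ (i,j))) * det M"
proof -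
  define Mp where "Mp = char_poly_matrix (- M)"
  have mM: "- M \<in> carrier_mat (k+2) (k+2)" using M by simp
  have Mp: "Mp \<in> carrier_mat (k+2) (k+2)" unfolding Mp_def using mM by simp
  have "coeff (det Mp) (k+2) = 1" using degree_monic_char_poly[OF mM]
    unfolding Mp_def char_poly_def by simp
  hence nz: "det Mp \<noteq> 0" by auto
  have ev: "poly (Mp $$ (i,j)) 0 = M $$ (i,j)" if "i < k+2" "j < k+2" for i j
    using that M unfolding Mp_def char_poly_matrix_def by simp
  have minor: "poly (det (mat_delete Mp i j)) 0 = det (mat_delete M i j)"
    if "i < k+2" "j < k+2" for i j
    by (rule poly_det_cong[of _ "k+1"]) (use M Mp ev in \<open>auto simp: mat_delete_def\<close>)
  have blk: "poly (det (mat k k (\<lambda>(i,j). Mp $$ (i,j)))) 0 = det (mat k k (\<lambda>(i,j). M $$ (i,j)))"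
    by (rule poly_det_cong[of _ k]) (use ev in auto)
  have full: "poly (det Mp) 0 = det M"
    by (rule poly_det_cong[OF M Mp]) (use ev in auto)
  have "det (mat_delete Mp (k+1) (k+1)) * det (mat_delete Mp k k)
          - det (mat_delete Mp (k+1) k) * det (mat_delete Mp k (k+1))
        = det (mat k k (\<lambda>(i,j). Mp $$ (i,j))) * det Mp"
    using dj_idom_aux[OF Mp] nz by simp
  hence "poly (det (mat_delete Mp (k+1) (k+1)) * det (mat_delete Mp k k)
          - det (mat_delete Mp (k+1) k) * det (mat_delete Mp k (k+1))) 0
        = poly (det (mat k k (\<lambda>(i,j). Mp $$ (i,j))) * det Mp) 0" by simp
  thus ?thesis by (simp only: poly_diff poly_mult minor blk full)
qed

lemma twop_hol1:
  assumes "open S" "h holomorphic_on S"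
  shows "twop c h holomorphic_on S"
  unfolding twop_def by (intro holomorphic_intros assms)

lemma twop_hol:
  assumes "open S" "f holomorphic_on S"
  shows "(twop c ^^ b) f holomorphic_on S"
proof (induction b)
  case 0 then show ?case using assms by simp
next
  case (Suc b)
  show ?case using twop_hol1[OF assms(1) Suc] by simp
qed

lemma twop_deriv:
  assumes "open S" "f holomorphic_on S" "z \<in> S"
  shows "((twop c ^^ b) f has_field_derivative
           ((twop c ^^ Suc b) f z - c * (twop c ^^ b) f z)) (at z)"
proof -
  have "((twop c ^^ b) f has_field_derivative deriv ((twop c ^^ b) f) z) (at z)"
    by (rule holomorphic_derivI[OF twop_hol[OF assms(1,2)] assms(1,3)])
  thus ?thesis by (simp add: twop_def)
qed

lemma det_mat_sum:
  "det (mat k k (\<lambda>(i,j). F i j)) = (\<Sum>p\<in>{p. p permutes {0..<k}}. signof p * (\<Prod>i=0..<k. F i (p i)))"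
proof -
  have "det (mat k k (\<lambda>(i,j). F i j)) = (\<Sum>p\<in>{p. p permutes {0..<k}}. signof p * (\<Prod>i=0..<k. mat k k (\<lambda>(i,j). F i j) $$ (i, p i)))"
    by (rule det_def') simp
  also have "\<dots> = (\<Sum>p\<in>{p. p permutes {0..<k}}. signof p * (\<Prod>i=0..<k. F i (p i)))"
  proof (intro sum.cong refl arg_cong2[where f="(*)"] prod.cong)
    fix p i assume p: "p \<in> {p. p permutes {0..<k}}" and i: "i \<in> {0..<k}"
    have "p i < k" using p i by (simp add: permutes_in_image)
    thus "mat k k (\<lambda>(i,j). F i j) $$ (i, p i) = F i (p i)" using i by simp
  qed
  finally show ?thesis .
qed

lemma twr_deriv:
  assumes k: "k \<ge> 1" and S: "open S" "z \<in> S" and hol: "\<And>a. a < k \<Longrightarrow> f a holomorphic_on S"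
  shows "(twronskian k g f has_field_derivative
     (det (mat k k (\<lambda>(a,b). if b = k-1 then (twop (g a) ^^ k) (f a) z else (twop (g a) ^^ b) (f a) z))
       - (\<Sum>a<k. g a) * twronskian k g f z)) (at z)"
proof -
  define e where "e i j = (twop (g i) ^^ j) (f i)" for i j
  define P where "P = {p. p permutes {0..<k}}"
  have finP: "finite P" unfolding P_def by (simp add: finite_permutations)
  have tw: "twronskian k g f = (\<lambda>z. \<Sum>p\<in>P. signof p * (\<Prod>i=0..<k. e i (p i) z))"
    unfolding twronskian_def P_def e_def by (intro ext det_mat_sum)
  define e' where "e' i j = e i (Suc j) z - g i * e i j z" for i j
  have de: "(e i j has_field_derivative e' i j) (at z)" if "i < k" for i j
    unfolding e_def e'_def using twop_deriv[OF S(1) hol[OF that] S(2)] by simp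
  define D where "D p = (\<Sum>i\<in>{0..<k}. e' i (p i) * (\<Prod>y\<in>{0..<k}-{i}. e y (p y) z))" for p
  have der: "((\<lambda>z. \<Sum>p\<in>P. signof p * (\<Prod>i=0..<k. e i (p i) z)) has_field_derivative (\<Sum>p\<in>P. signof p * D p)) (at z)"
    unfolding D_def
    by (intro DERIV_sum DERIV_cmult has_field_derivative_prod de) auto
  define T where "T p = (\<Sum>i\<in>{0..<k}. e i (Suc (p i)) z * (\<Prod>y\<in>{0..<k}-{i}. e y (p y) z))" for p
  have Dsplit: "D p = T p - (\<Sum>a<k. g a) * (\<Prod>i=0..<k. e i (p i) z)" for p
  proof -
    have "D p = (\<Sum>i\<in>{0..<k}. e i (Suc (p i)) z * (\<Prod>y\<in>{0..<k}-{i}. e y (p y) z)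
                 - g i * (e i (p i) z * (\<Prod>y\<in>{0..<k}-{i}. e y (p y) z)))"
      unfolding D_def e'_def by (intro sum.cong refl) (simp add: algebra_simps)
    also have "\<dots> = T p - (\<Sum>i\<in>{0..<k}. g i * (\<Prod>i=0..<k. e i (p i) z))"
      unfolding T_def sum_subtractf
      by (intro arg_cong2[where f="(-)"] refl sum.cong arg_cong2[where f="(*)"])
         (use prod.remove[where A="{0..<k}" and g="\<lambda>i. e i (p i) z"] in auto)
    finally show ?thesis by (simp add: sum_distrib_right atLeast0LessThan)
  qed
  define F where "F c = mat k k (\<lambda>(a,b). if b = c then e a (Suc c) z else e a b z)" for c
  have detF: "det (F c) = (\<Sum>p\<in>P. signof p * (\<Prod>i=0..<k. if p i = c then e i (Suc c) z else e i (p i) z))" for c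
    unfolding F_def P_def by (rule det_mat_sum)
  have Tsum: "(\<Sum>c\<in>{0..<k}. (\<Prod>i=0..<k. if p i = c then e i (Suc c) z else e i (p i) z)) = T p"
    if p: "p \<in> P" for p
  proof -
    have bij: "bij_betw p {0..<k} {0..<k}" using p unfolding P_def by (simp add: permutes_imp_bij)
    have inj: "inj p" using p unfolding P_def by (simp add: permutes_inj)
    have "(\<Sum>c\<in>{0..<k}. (\<Prod>i=0..<k. if p i = c then e i (Suc c) z else e i (p i) z))
        = (\<Sum>j\<in>{0..<k}. (\<Prod>i=0..<k. if p i = p j then e i (Suc (p j)) z else e i (p i) z))"
      by (rule sum.reindex_bij_betw[OF bij, symmetric])
    also have "\<dots> = (\<Sum>j\<in>{0..<k}. (\<Prod>i=0..<k. if i = j then e i (Suc (p i)) z else e i (p i) z))"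
      using inj by (intro sum.cong prod.cong refl) (auto dest: injD)
    also have "\<dots> = T p"
      unfolding T_def
    proof (intro sum.cong refl)
      fix j assume j: "j \<in> {0..<k}"
      have "(\<Prod>i=0..<k. if i = j then e i (Suc (p i)) z else e i (p i) z)
          = e j (Suc (p j)) z * (\<Prod>i\<in>{0..<k}-{j}. if i = j then e i (Suc (p i)) z else e i (p i) z)"
        using j by (subst prod.remove[of _ j]) auto
      also have "(\<Prod>i\<in>{0..<k}-{j}. if i = j then e i (Suc (p i)) z else e i (p i) z)
          = (\<Prod>i\<in>{0..<k}-{j}. e i (p i) z)" by (intro prod.cong) auto
      finally show "(\<Prod>i=0..<k. if i = j then e i (Suc (p i)) z else e i (p i) z)
          = e j (Suc (p j)) z * (\<Prod>i\<in>{0..<k}-{j}. e i (p i) z)" .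
    qed
    finally show ?thesis .
  qed
  have sumT: "(\<Sum>p\<in>P. signof p * T p) = (\<Sum>c\<in>{0..<k}. det (F c))"
  proof -
    have "(\<Sum>c\<in>{0..<k}. det (F c)) = (\<Sum>c\<in>{0..<k}. \<Sum>p\<in>P. signof p * (\<Prod>i=0..<k. if p i = c then e i (Suc c) z else e i (p i) z))"
      using detF by simp
    also have "\<dots> = (\<Sum>p\<in>P. signof p * (\<Sum>c\<in>{0..<k}. (\<Prod>i=0..<k. if p i = c then e i (Suc c) z else e i (p i) z)))"
      by (subst sum.swap) (simp add: sum_distrib_left)
    also have "\<dots> = (\<Sum>p\<in>P. signof p * T p)" using Tsum by (intro sum.cong refl) simp
    finally show ?thesis by simp
  qed
  obtain m where m: "k = Suc m" using k by (cases k) auto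
  have F0: "det (F c) = 0" if c: "c < m" for c
  proof (rule det_identical_columns[of _ k c "Suc c"])
    show "F c \<in> carrier_mat k k" unfolding F_def by simp
    show "col (F c) c = col (F c) (Suc c)"
      using c m unfolding F_def by (intro eq_vecI) auto
  qed (use c m in auto)
  have sumF: "(\<Sum>c\<in>{0..<k}. det (F c)) = det (F m)"
    using F0 unfolding m by (simp add: sum.atLeast0_lessThan_Suc)
  have Fm: "F m = mat k k (\<lambda>(a,b). if b = k-1 then (twop (g a) ^^ k) (f a) z else (twop (g a) ^^ b) (f a) z)"
    unfolding F_def e_def m by (intro eq_matI) auto
  have "(\<Sum>p\<in>P. signof p * D p) = (\<Sum>p\<in>P. signof p * T p) - (\<Sum>a<k. g a) * (\<Sum>p\<in>P. signof p * (\<Prod>i=0..<k. e i (p i) z))"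
    unfolding Dsplit by (simp add: algebra_simps sum_subtractf sum_distrib_left)
  also have "\<dots> = det (mat k k (\<lambda>(a,b). if b = k-1 then (twop (g a) ^^ k) (f a) z else (twop (g a) ^^ b) (f a) z))
       - (\<Sum>a<k. g a) * twronskian k g f z"
    using sumT sumF Fm tw by simp
  finally show ?thesis using der tw by simp
qed

theorem mainTheorem4:
  fixes n :: nat and \<gamma> :: "nat \<Rightarrow> complex" and s :: "nat \<Rightarrow> complex \<Rightarrow> complex"
    and S :: "complex set" and z :: complex
  assumes "n \<ge> 1"
    and "open S"
    and "\<And>i. i \<in> {1..n+1} \<Longrightarrow> s i holomorphic_on S"
    and "z \<in> S"
  shows "twronskian 2 (\<lambda>a. if a = 0 then \<gamma> n else \<gamma> (n+1))
           (\<lambda>a. if a = 0 then twronskian n (\<lambda>a. \<gamma> (a+1)) (\<lambda>a. s (a+1))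
                 else twronskian n (\<lambda>a. if a < n - 1 then \<gamma> (a+1) else \<gamma> (n+1))
                                   (\<lambda>a. if a < n - 1 then s (a+1) else s (n+1))) z
       = twronskian (n - 1) (\<lambda>a. \<gamma> (a+1)) (\<lambda>a. s (a+1)) z
         * twronskian (n + 1) (\<lambda>a. \<gamma> (a+1)) (\<lambda>a. s (a+1)) z"
proof -
  obtain m where n: "n = Suc m" using assms(1) by (cases n) auto
  define c where "c a = \<gamma> (a+1)" for a
  define F where "F a = s (a+1)" for a
  define c' where "c' a = (if a < n - 1 then \<gamma> (a+1) else \<gamma> (n+1))" for a
  define F' where "F' a = (if a < n - 1 then s (a+1) else s (n+1))" for a
  define A where "A = twronskian n c F"
  define B where "B = twronskian n c' F'"
  define E where "E a b = (twop (c a) ^^ b) (F a) z" for a b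
  define M where "M = mat (m+2) (m+2) (\<lambda>(a,b). E a b)"
  have Mc: "M \<in> carrier_mat (m+2) (m+2)" unfolding M_def by simp
  have hF: "F a holomorphic_on S" if "a < n+1" for a
    unfolding F_def using assms(3)[of "a+1"] that by auto
  have hF': "F' a holomorphic_on S" if "a < n" for a
    unfolding F'_def using assms(3) that by auto
  have E': "(twop (c' a) ^^ b) (F' a) z = E (if a < m then a else Suc a) b" if "a < n" for a b
    using that unfolding E_def c'_def F'_def c_def F_def n by (cases "a = m") auto
  have dA: "deriv A z = det (mat n n (\<lambda>(a,b). if b = n-1 then E a n else E a b)) - (\<Sum>a<n. c a) * A z"
    unfolding A_def E_def
    by (rule DERIV_imp_deriv, rule twr_deriv[OF assms(1,2,4)]) (use hF in auto)
  have dB: "deriv B z = det (mat n n (\<lambda>(a,b). if b = n-1 then (twop (c' a) ^^ n) (F' a) z else (twop (c' a) ^^ b) (F' a) z)) - (\<Sum>a<n. c' a) * B z"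
    unfolding B_def
    by (rule DERIV_imp_deriv, rule twr_deriv[OF assms(1,2,4)]) (use hF' in auto)
  have lhs: "twronskian 2 (\<lambda>a. if a = 0 then \<gamma> n else \<gamma> (n+1)) (\<lambda>a. if a = 0 then A else B) z
     = A z * (deriv B z + \<gamma> (n+1) * B z) - (deriv A z + \<gamma> n * A z) * B z"
    unfolding twronskian_def[of 2] by (subst det_2x2) (auto simp: twop_def)
  have mA: "A z = det (mat_delete M (m+1) (m+1))"
    unfolding A_def twronskian_def E_def M_def n
    by (intro arg_cong[where f=det] eq_matI) (auto simp: mat_delete_def)
  have mAt: "det (mat n n (\<lambda>(a,b). if b = n-1 then E a n else E a b)) = det (mat_delete M (m+1) m)"
    unfolding M_def n
    by (intro arg_cong[where f=det] eq_matI) (auto simp: mat_delete_def)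
  have mB: "B z = det (mat_delete M m (m+1))"
    unfolding B_def twronskian_def
    by (intro arg_cong[where f=det] eq_matI) (auto simp: mat_delete_def E' M_def n)
  have mBt: "det (mat n n (\<lambda>(a,b). if b = n-1 then (twop (c' a) ^^ n) (F' a) z else (twop (c' a) ^^ b) (F' a) z))
       = det (mat_delete M m m)"
    by (intro arg_cong[where f=det] eq_matI) (auto simp: mat_delete_def E' M_def n simp del: funpow.simps)
  have mW1: "twronskian (n - 1) c F z = det (mat m m (\<lambda>(i,j). M $$ (i,j)))"
    unfolding twronskian_def E_def M_def n
    by (intro arg_cong[where f=det] eq_matI) auto
  have mW2: "twronskian (n + 1) c F z = det M"
    unfolding twronskian_def E_def M_def n
    by (intro arg_cong[where f=det] eq_matI) auto
  have s1: "(\<Sum>a<n. c a) = (\<Sum>a<m. c a) + \<gamma> n" unfolding n c_def by simp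
  have s2: "(\<Sum>a<n. c' a) = (\<Sum>a<m. c a) + \<gamma> (n+1)"
  proof -
    have s2a: "(\<Sum>a<m. c' a) = (\<Sum>a<m. c a)" unfolding c'_def c_def n by (intro sum.cong) auto
    have c'm: "c' m = \<gamma> (n+1)" unfolding c'_def n by simp
    show ?thesis unfolding n by (simp add: s2a c'm[unfolded n])
  qed
  have DJ: "det (mat_delete M (m+1) (m+1)) * det (mat_delete M m m)
          - det (mat_delete M (m+1) m) * det (mat_delete M m (m+1))
        = det (mat m m (\<lambda>(i,j). M $$ (i,j))) * det M"
    by (rule dj[OF Mc])
  have "twronskian 2 (\<lambda>a. if a = 0 then \<gamma> n else \<gamma> (n+1)) (\<lambda>a. if a = 0 then A else B) z
       = twronskian (n - 1) c F z * twronskian (n + 1) c F z"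
    unfolding lhs dA dB mAt mBt s1 s2 mW1 mW2 DJ[symmetric] mA[symmetric] mB[symmetric]
    by (simp add: algebra_simps)
  thus ?thesis unfolding A_def B_def c_def F_def c'_def F'_def .
qed

end
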